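(* Let $E_1,\dots,E_m$ be events on a probability space, let $1\le k\le m$, and fix real numbers $0<a<b$. Define $X_i=b$ on $E_i$ and $X_i=a$ on $E_i^c$, and for $\mathcal S\subseteq[m]$ with $|\mathcal S|=k$ define $$U(\mathcal S)=\mathbf P\Big(\bigcup_{i\in\mathcal S}E_i\Big),\qquad V(\mathcal S)=\mathbf E\Big[\ln\Big(\frac1k\sum_{i\in\mathcal S}X_i\Big)\Big].$$ Let $\mathcal S_L$ maximize $V$ and $\mathcal S_W$ maximize $U$ over all $k$-element subsets of $[m]$. Suppose there exist $\lambda\in[0,1]$ and $p\in(0,1/k]$ such that for every $k$-element $\mathcal S\subseteq[m]$, every $l\in[k]$, and every $T\subseteq\mathcal S$ with $|T|=l$, $$(1-\lambda)p^l(1-p)^{k-l}\le \mathbf P\Big(\Big(\bigcap_{i\in T}E_i\Big)\cap\Big(\bigcap_{j\in\mathcal S\setminus T}E_j^c\Big)\Big)\le(1+\lambda)p^l(1-p)^{k-l}.$$ Then $$\frac{U(\mathcal S_W)-U(\mathcal S_L)}{U(\mathcal S_W)}\le\frac{2\zeta(3)\lambda kp(1-p)}{\ln\!\big(1+\frac{b-a}{ka}\big)(1-\lambda)\big(1-(1-p)^k\big)},$$ where $\zeta(3)=\sum_{n=1}^\infty n^{-3}$.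
   Context: $[m]=\{1,\dots,m\}$. $\mathcal S_W$ is an optimal "picking winners" portfolio and $\mathcal S_L$ a log-optimal portfolio. *)

theory Defs
  imports "HOL-Probability.Probability"
begin

definition payoff :: "'a set \<Rightarrow> real \<Rightarrow> real \<Rightarrow> 'a \<Rightarrow> real" where
  "payoff A a b \<omega> = (if \<omega> \<in> A then b else a)"

definition winU :: "'a measure \<Rightarrow> (nat \<Rightarrow> 'a set) \<Rightarrow> nat set \<Rightarrow> real" where
  "winU M E S = measure M (\<Union>i\<in>S. E i)"

definition logV :: "'a measure \<Rightarrow> (nat \<Rightarrow> 'a set) \<Rightarrow> real \<Rightarrow> real \<Rightarrow> nat \<Rightarrow> nat set \<Rightarrow> real" where
  "logV M E a b k S = (\<integral>\<omega>. ln ((1 / real k) * (\<Sum>i\<in>S. payoff (E i) a b \<omega>)) \<partial>M)"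

definition zeta3 :: real where
  "zeta3 = (\<Sum>n. 1 / (real (Suc n)) ^ 3)"

end

theory Submission
  imports Defs
begin

lemma sum_pow_card:
  fixes h :: "nat \<Rightarrow> real"
  assumes "finite S"
  shows "(\<Sum>T\<in>Pow S. h (card T)) = (\<Sum>l\<le>card S. real (card S choose l) * h l)"
proof -
  have "(\<Sum>T\<in>Pow S. h (card T)) = (\<Sum>l\<le>card S. \<Sum>T\<in>{T\<in>Pow S. card T = l}. h (card T))"
    by (rule sum.group[symmetric]) (use assms in \<open>auto intro: card_mono\<close>)
  also have "\<dots> = (\<Sum>l\<le>card S. real (card S choose l) * h l)"
  proof (rule sum.cong)
    fix l assume "l \<in> {..card S}"
    have "(\<Sum>T\<in>{T\<in>Pow S. card T = l}. h (card T)) = (\<Sum>T\<in>{T\<in>Pow S. card T = l}. h l)"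
      by simp
    also have "\<dots> = real (card {T\<in>Pow S. card T = l}) * h l" by simp
    also have "{T\<in>Pow S. card T = l} = {B. B \<subseteq> S \<and> card B = l}" by auto
    finally show "(\<Sum>T\<in>{T\<in>Pow S. card T = l}. h (card T)) = real (card S choose l) * h l"
      using n_subsets[OF assms, of l] by simp
  qed simp
  finally show ?thesis .
qed

lemma bin1:
  fixes p :: real
  shows "(\<Sum>l\<le>n. real (n choose l) * (p ^ l * (1 - p) ^ (n - l))) = 1"
  using binomial_ring[of p "1 - p" n] by (simp add: mult.assoc)

lemma bin2:
  fixes p :: real
  shows "(\<Sum>l\<le>n. real (n choose l) * (p ^ l * (1 - p) ^ (n - l) * real l)) = real n * p"
proof (cases n)
  case 0 then show ?thesis by simp
next
  case (Suc m)
  have "(\<Sum>l\<le>Suc m. real (Suc m choose l) * (p ^ l * (1 - p) ^ (Suc m - l) * real l))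
      = (\<Sum>j\<le>m. real (Suc m choose Suc j) * (p ^ Suc j * (1 - p) ^ (Suc m - Suc j) * real (Suc j)))"
    by (subst sum.atMost_Suc_shift) simp
  also have "\<dots> = (\<Sum>j\<le>m. (real (Suc m) * p) * (real (m choose j) * (p ^ j * (1 - p) ^ (m - j))))"
  proof (rule sum.cong)
    fix j assume "j \<in> {..m}"
    have "real (Suc m choose Suc j) * real (Suc j) = real (Suc m) * real (m choose j)"
      using Suc_times_binomial[of j m] by (metis mult.commute of_nat_mult)
    note h = this
    have "real (Suc m choose Suc j) * (p ^ Suc j * (1 - p) ^ (Suc m - Suc j) * real (Suc j))
       = (real (Suc m choose Suc j) * real (Suc j)) * (p * (p ^ j * (1 - p) ^ (m - j)))"
      by (simp add: mult_ac)
    also have "\<dots> = (real (Suc m) * real (m choose j)) * (p * (p ^ j * (1 - p) ^ (m - j)))"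
      by (simp only: h)
    finally show "real (Suc m choose Suc j) * (p ^ Suc j * (1 - p) ^ (Suc m - Suc j) * real (Suc j))
       = (real (Suc m) * p) * (real (m choose j) * (p ^ j * (1 - p) ^ (m - j)))"
      by (simp add: mult_ac)
  qed simp
  also have "\<dots> = real (Suc m) * p" by (simp add: sum_distrib_left[symmetric] bin1)
  finally show ?thesis using Suc by simp
qed

lemma zeta3_ge1: "zeta3 \<ge> 1"
proof -
  have s: "summable (\<lambda>n. 1 / (real (Suc n)) ^ 3)"
  proof -
    have "summable (\<lambda>n. inverse (real n ^ 3))"
      by (rule inverse_power_summable) auto
    then have "summable (\<lambda>n. inverse (real (Suc n) ^ 3))"
      by (subst summable_Suc_iff)
    then show ?thesis by (simp add: divide_inverse)
  qed
  have "(\<Sum>n<1. 1 / (real (Suc n)) ^ 3) \<le> (\<Sum>n. 1 / (real (Suc n)) ^ 3)"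
    by (rule sum_le_suminf[OF s]) auto
  then show ?thesis unfolding zeta3_def by simp
qed


definition cell :: "'a measure \<Rightarrow> (nat \<Rightarrow> 'a set) \<Rightarrow> nat set \<Rightarrow> nat set \<Rightarrow> 'a set" where
  "cell M E S T = {\<omega>\<in>space M. \<forall>i\<in>S. (\<omega> \<in> E i) = (i \<in> T)}"

lemma cell_sets:
  assumes "finite S" "\<forall>i\<in>S. E i \<in> sets M"
  shows "cell M E S T \<in> sets M"
  unfolding cell_def
proof (rule sets.sets_Collect_finite_All[OF _ assms(1)])
  fix i assume i: "i \<in> S"
  show "{x \<in> space M. (x \<in> E i) = (i \<in> T)} \<in> sets M"
  proof (cases "i \<in> T")
    case True
    then have "{x \<in> space M. (x \<in> E i) = (i \<in> T)} = E i"
      using sets.sets_into_space[of "E i" M] assms(2) i by auto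
    then show ?thesis using assms(2) i by simp
  next
    case False
    then have "{x \<in> space M. (x \<in> E i) = (i \<in> T)} = space M - E i" by auto
    then show ?thesis using assms(2) i by auto
  qed
qed

lemma key_int:
  fixes c :: "nat set \<Rightarrow> real"
  assumes "prob_space M" "finite S" "\<forall>i\<in>S. E i \<in> sets M"
  shows "(\<integral>\<omega>. c {i\<in>S. \<omega> \<in> E i} \<partial>M) = (\<Sum>T\<in>Pow S. c T * measure M (cell M E S T))"
proof -
  interpret prob_space M by fact
  have pt: "c {i\<in>S. \<omega> \<in> E i} = (\<Sum>T\<in>Pow S. c T * indicator (cell M E S T) \<omega>)"
    if w: "\<omega> \<in> space M" for \<omega>
  proof -
    let ?X = "{i\<in>S. \<omega> \<in> E i}"
    have "(\<Sum>T\<in>Pow S. c T * indicator (cell M E S T) \<omega>) = (\<Sum>T\<in>Pow S. if T = ?X then c T else 0)"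
    proof (rule sum.cong)
      fix T assume "T \<in> Pow S"
      then have "(\<omega> \<in> cell M E S T) = (T = ?X)" using w unfolding cell_def by auto
      then show "c T * indicator (cell M E S T) \<omega> = (if T = ?X then c T else 0)"
        by (simp add: indicator_def)
    qed simp
    also have "\<dots> = c ?X" using assms(2) by (simp add: sum.delta')
    finally show ?thesis by simp
  qed
  have "(\<integral>\<omega>. c {i\<in>S. \<omega> \<in> E i} \<partial>M) = (\<integral>\<omega>. (\<Sum>T\<in>Pow S. c T * indicator (cell M E S T) \<omega>) \<partial>M)"
    by (intro Bochner_Integration.integral_cong refl pt)
  also have "\<dots> = (\<Sum>T\<in>Pow S. (\<integral>\<omega>. c T * indicator (cell M E S T) \<omega> \<partial>M))"
  proof (rule Bochner_Integration.integral_sum)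
    fix T
    have "integrable M (indicator (cell M E S T) :: 'a \<Rightarrow> real)"
      using cell_sets[OF assms(2,3)] by (intro integrable_real_indicator) (auto simp: emeasure_eq_measure)
    then show "integrable M (\<lambda>\<omega>. c T * indicator (cell M E S T) \<omega>)"
      by (rule integrable_mult_right)
  qed
  also have "\<dots> = (\<Sum>T\<in>Pow S. c T * measure M (cell M E S T))"
  proof (rule sum.cong)
    fix T
    have "cell M E S T \<inter> space M = cell M E S T" unfolding cell_def by auto
    then show "(\<integral>\<omega>. c T * indicator (cell M E S T) \<omega> \<partial>M) = c T * measure M (cell M E S T)"
      by simp
  qed simp
  finally show ?thesis .
qed


lemma cell_eq:
  assumes "S \<noteq> {}" "\<forall>i\<in>S. E i \<subseteq> space M" "T \<subseteq> S"
  shows "(\<Inter>i\<in>T. E i) \<inter> (\<Inter>j\<in>S - T. space M - E j) = cell M E S T"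
proof
  show "(\<Inter>i\<in>T. E i) \<inter> (\<Inter>j\<in>S - T. space M - E j) \<subseteq> cell M E S T"
  proof
    fix x assume x: "x \<in> (\<Inter>i\<in>T. E i) \<inter> (\<Inter>j\<in>S - T. space M - E j)"
    obtain i where i: "i \<in> S" using assms(1) by auto
    have "x \<in> space M"
    proof (cases "i \<in> T")
      case True then show ?thesis using x i assms(2) by auto
    next
      case False
      then have "i \<in> S - T" using i by blast
      then have "x \<in> space M - E i" using x by blast
      then show ?thesis by blast
    qed
    moreover have "(x \<in> E j) = (j \<in> T)" if "j \<in> S" for j
    proof (cases "j \<in> T")
      case True then show ?thesis using x by blast
    next
      case False then have "j \<in> S - T" using that by blast
      then show ?thesis using x False by blast
    qed
    ultimately show "x \<in> cell M E S T" unfolding cell_def by blast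
  qed
  show "cell M E S T \<subseteq> (\<Inter>i\<in>T. E i) \<inter> (\<Inter>j\<in>S - T. space M - E j)"
    using assms(3) unfolding cell_def by auto
qed

lemma per_S:
  assumes "prob_space M" "finite S" "\<forall>i\<in>S. E i \<in> sets M" "card S = k"
  shows "(\<Sum>T\<in>Pow S. measure M (cell M E S T)) = 1"
    and "winU M E S = (\<Sum>T\<in>Pow S. (if card T = 0 then 0 else 1) * measure M (cell M E S T))"
    and "logV M E a b k S = (\<Sum>T\<in>Pow S. ln ((1 / real k) * (real (card T) * b + (real k - real (card T)) * a)) * measure M (cell M E S T))"
proof -
  interpret prob_space M by fact
  have "(\<integral>\<omega>. (\<lambda>T. 1::real) {i\<in>S. \<omega> \<in> E i} \<partial>M) = (\<Sum>T\<in>Pow S. 1 * measure M (cell M E S T))"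
    by (rule key_int[OF assms(1-3)])
  then show "(\<Sum>T\<in>Pow S. measure M (cell M E S T)) = 1" by (simp add: prob_space)
  have sp: "E i \<subseteq> space M" if "i \<in> S" for i using assms(3) that sets.sets_into_space by blast
  have "winU M E S = (\<integral>\<omega>. indicator (\<Union>i\<in>S. E i) \<omega> \<partial>M)"
    unfolding winU_def using sp by (simp add: Int_absorb2 UN_least)
  also have "\<dots> = (\<integral>\<omega>. (\<lambda>T. if card T = 0 then 0 else 1::real) {i\<in>S. \<omega> \<in> E i} \<partial>M)"
    by (intro Bochner_Integration.integral_cong refl) (auto simp: indicator_def assms(2))
  also have "\<dots> = (\<Sum>T\<in>Pow S. (if card T = 0 then 0 else 1) * measure M (cell M E S T))"
    by (rule key_int[OF assms(1-3)])
  finally show "winU M E S = (\<Sum>T\<in>Pow S. (if card T = 0 then 0 else 1) * measure M (cell M E S T))" .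
  have ps: "(\<Sum>i\<in>S. payoff (E i) a b \<omega>) = real (card {i\<in>S. \<omega> \<in> E i}) * b + (real k - real (card {i\<in>S. \<omega> \<in> E i})) * a" for \<omega>
  proof -
    have cd: "real (card (S - {i\<in>S. \<omega> \<in> E i})) = real k - real (card {i\<in>S. \<omega> \<in> E i})"
  proof -
    have "card {i\<in>S. \<omega> \<in> E i} \<le> card S" by (rule card_mono) (use assms(2) in auto)
    then show ?thesis using assms(2,4) by (simp add: card_Diff_subset of_nat_diff)
  qed
    have "(\<Sum>i\<in>S. payoff (E i) a b \<omega>) = (\<Sum>i\<in>S. if \<omega> \<in> E i then b else a)"
      unfolding payoff_def by simp
    also have "\<dots> = (\<Sum>i\<in>S \<inter> {i. \<omega> \<in> E i}. b) + (\<Sum>i\<in>S \<inter> - {i. \<omega> \<in> E i}. a)"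
      by (rule sum.If_cases[OF assms(2)])
    also have "S \<inter> {i. \<omega> \<in> E i} = {i\<in>S. \<omega> \<in> E i}" by auto
    also have "S \<inter> - {i. \<omega> \<in> E i} = S - {i\<in>S. \<omega> \<in> E i}" by auto
    finally show ?thesis using cd by simp
  qed
  have "logV M E a b k S = (\<integral>\<omega>. (\<lambda>T. ln ((1 / real k) * (real (card T) * b + (real k - real (card T)) * a))) {i\<in>S. \<omega> \<in> E i} \<partial>M)"
    unfolding logV_def by (simp only: ps)
  also have "\<dots> = (\<Sum>T\<in>Pow S. ln ((1 / real k) * (real (card T) * b + (real k - real (card T)) * a)) * measure M (cell M E S T))"
    by (rule key_int[OF assms(1-3)])
  finally show "logV M E a b k S = (\<Sum>T\<in>Pow S. ln ((1 / real k) * (real (card T) * b + (real k - real (card T)) * a)) * measure M (cell M E S T))" .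
qed


lemma pow_bound:
  fixes p :: real
  assumes "1 \<le> k" "0 < p" "p \<le> 1 / real k"
  shows "(1 - p) ^ k \<le> 1 - real k * p ^ 2"
proof -
  have kp: "real k * p \<le> 1" using assms by (simp add: field_simps)
  have p1: "p \<le> 1" using assms(1,3) by (smt (verit) divide_le_eq_1 of_nat_1 of_nat_mono)
  have b1: "1 + real k * p \<le> (1 + p) ^ k" using Bernoulli_inequality[of p k] assms by simp
  have "(1 - p) ^ k * (1 + p) ^ k = (1 - p ^ 2) ^ k"
    by (simp add: power_mult_distrib[symmetric] power2_eq_square algebra_simps)
  also have "\<dots> \<le> 1" using p1 assms(2) by (intro power_le_one) (auto simp: power_le_one)
  finally have "(1 - p) ^ k * (1 + p) ^ k \<le> 1" .
  then have "(1 - p) ^ k * (1 + real k * p) \<le> 1"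
    using b1 p1 by (smt (verit) mult_left_mono zero_le_power)
  then have A: "(1 - p) ^ k \<le> 1 / (1 + real k * p)"
  proof -
    have pos: "0 < 1 + real k * p" using assms(2) by (simp add: add_pos_nonneg)
    then show ?thesis using \<open>(1 - p) ^ k * (1 + real k * p) \<le> 1\<close> pos_le_divide_eq by blast
  qed
  show ?thesis
  proof (cases "k = 1")
    case True then show ?thesis using p1 assms(2) by (simp add: power2_eq_square)
  next
    case False
    then have "real k \<ge> 2" using assms(1) by simp
    then have "p \<le> 1/2" using assms(3) by (smt (verit) frac_le)
    moreover have "p * (1 + real k * p) \<le> p * 2" by (rule mult_left_mono) (use kp assms(2) in auto)
    ultimately have "p * (1 + real k * p) \<le> 1" by linarith
    then have "0 \<le> real k * p * (1 - p * (1 + real k * p))"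
      using assms(2) by (intro mult_nonneg_nonneg) auto
    moreover have "(1 - real k * p ^ 2) * (1 + real k * p) = 1 + real k * p * (1 - p * (1 + real k * p))"
      by (simp add: algebra_simps power2_eq_square)
    ultimately have "1 \<le> (1 - real k * p ^ 2) * (1 + real k * p)" by linarith
    moreover have pos: "0 < 1 + real k * p" using assms(2) by (simp add: add_pos_nonneg)
    ultimately have "1 / (1 + real k * p) \<le> 1 - real k * p ^ 2"
      using pos_divide_le_eq by blast
    then show ?thesis using A by simp
  qed
qed


theorem theorem5:
  fixes M :: "'a measure" and E :: "nat \<Rightarrow> 'a set" and m k :: nat
    and a b lam p :: real and S_L S_W :: "nat set"
  assumes "prob_space M"
    and "\<forall>i\<in>{1..m}. E i \<in> sets M"
    and "1 \<le> k" and "k \<le> m"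
    and "0 < a" and "a < b"
    and "S_L \<subseteq> {1..m}" and "card S_L = k"
    and "\<forall>S. S \<subseteq> {1..m} \<and> card S = k \<longrightarrow> logV M E a b k S \<le> logV M E a b k S_L"
    and "S_W \<subseteq> {1..m}" and "card S_W = k"
    and "\<forall>S. S \<subseteq> {1..m} \<and> card S = k \<longrightarrow> winU M E S \<le> winU M E S_W"
    and "0 \<le> lam" and "lam \<le> 1"
    and "0 < p" and "p \<le> 1 / real k"
    and "\<forall>S. S \<subseteq> {1..m} \<and> card S = k \<longrightarrow>
           (\<forall>T. T \<subseteq> S \<and> 1 \<le> card T \<longrightarrow>
              (1 - lam) * p ^ card T * (1 - p) ^ (k - card T)
                \<le> measure M ((\<Inter>i\<in>T. E i) \<inter> (\<Inter>j\<in>S - T. space M - E j))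
            \<and> measure M ((\<Inter>i\<in>T. E i) \<inter> (\<Inter>j\<in>S - T. space M - E j))
                \<le> (1 + lam) * p ^ card T * (1 - p) ^ (k - card T))"
  shows "lam < 1 \<longrightarrow>
    (winU M E S_W - winU M E S_L) / winU M E S_W
      \<le> 2 * zeta3 * lam * real k * p * (1 - p)
         / (ln (1 + (b - a) / (real k * a)) * (1 - lam) * (1 - (1 - p) ^ k))"
proof (intro impI)
  assume lam1: "lam < 1"
  note hyp = assms(17)
  define e where "e S T = measure M (cell M E S T)" for S T
  define pi where "pi l = p ^ l * (1 - p) ^ (k - l)" for l :: nat
  define u where "u l = (if l = 0 then 0 else 1::real)" for l :: nat
  define F where "F l = ln ((1 / real k) * (real l * b + (real k - real l) * a))" for l :: nat
  define f1 where "f1 = ln (1 + (b - a) / (real k * a))"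
  define phi where "phi l = F l - F 0 - f1 * u l" for l
  define Q where "Q = 1 - (1 - p) ^ k"
  define Psi where "Psi = (\<Sum>l\<le>k. real (k choose l) * (pi l * phi l))"
  have kpos: "real k > 0" using assms(3) by simp
  have "1 / real k \<le> 1" using assms(3) by simp
  then have p1: "p \<le> 1" using assms(16) by linarith
  have Lpos: "real l * b + (real k - real l) * a > 0" if "l \<le> k" for l
  proof -
    have "real l * b \<ge> 0" using assms(5,6) by simp
    moreover have "(real k - real l) * a \<ge> 0" using that assms(5) by simp
    moreover have "real l * b + (real k - real l) * a = real k * a + real l * (b - a)"
      by (simp add: algebra_simps)
    moreover have "real k * a > 0" using kpos assms(5) by simp
    moreover have "real l * (b - a) \<ge> 0" using assms(6) by simp
    ultimately show ?thesis by linarith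
  qed
  have Fl: "F l = ln (real l * b + (real k - real l) * a) - ln (real k)" if "l \<le> k" for l
    unfolding F_def using Lpos[OF that] kpos by (simp add: ln_div divide_inverse[symmetric])
  have F0: "F 0 = ln a" unfolding F_def using kpos by simp
  have f1eq: "f1 = F 1 - F 0"
  proof -
    have "1 + (b - a) / (real k * a) = (b + (real k - 1) * a) / (real k * a)"
      using kpos assms(5) by (simp add: field_simps)
    then have "f1 = ln (b + (real k - 1) * a) - ln (real k * a)"
      unfolding f1_def using Lpos[of 1] assms(3) kpos assms(5) by (simp add: ln_div)
    also have "\<dots> = F 1 - F 0"
      using Fl[of 1] assms(3) F0 kpos assms(5) by (simp add: ln_mult)
    finally show ?thesis .
  qed
  have f1pos: "f1 > 0" unfolding f1_def using kpos assms(5,6) by (intro ln_gt_zero) (simp add: field_simps)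
  have phi0: "phi 0 = 0" unfolding phi_def u_def by simp
  have phib: "0 \<le> phi l \<and> phi l \<le> real l - u l" if "l \<le> k" for l
  proof (cases "l = 0")
    case True then show ?thesis using phi0 u_def by simp
  next
    case False
    define L where "L = real l * b + (real k - real l) * a"
    define L1 where "L1 = b + (real k - 1) * a"
    have Lp: "L > 0" using Lpos[OF that] L_def by simp
    have L1p: "L1 > 0" using Lpos[of 1] assms(3) L1_def by simp
    have "phi l = F l - F 1" unfolding phi_def u_def using False f1eq by simp
    also have "\<dots> = ln L - ln L1" using Fl[OF that] Fl[of 1] assms(3) L_def L1_def by simp
    also have "\<dots> = ln (L / L1)" using Lp L1p by (simp add: ln_div)
    finally have ph: "phi l = ln (L / L1)" .
    have LL: "L - L1 = (real l - 1) * (b - a)" unfolding L_def L1_def by (simp add: algebra_simps)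
    have l1: "real l \<ge> 1" using False by simp
    have "(real l - 1) * (b - a) \<ge> 0" using l1 assms(6) by simp
    then have "L \<ge> L1" using LL by linarith
    then have g0: "0 \<le> ln (L / L1)" using L1p by simp
    have "ln (L / L1) \<le> L / L1 - 1" using Lp L1p by (intro ln_le_minus_one) simp
    also have "\<dots> = (real l - 1) * ((b - a) / L1)" using L1p LL by (simp add: field_simps)
    also have "\<dots> \<le> (real l - 1) * 1"
    proof (rule mult_left_mono)
      have "L1 - (b - a) = real k * a" unfolding L1_def by (simp add: algebra_simps)
      moreover have "real k * a > 0" using kpos assms(5) by simp
      ultimately have "b - a \<le> L1" by linarith
      then show "(b - a) / L1 \<le> 1" using L1p by simp
    qed (use l1 in simp)
    finally show ?thesis using ph g0 False u_def by simp
  qed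
  have gen: "winU M E S = (\<Sum>T\<in>Pow S. u (card T) * e S T)
      \<and> logV M E a b k S = F 0 + f1 * winU M E S + (\<Sum>T\<in>Pow S. phi (card T) * e S T)
      \<and> (\<forall>T\<in>Pow S. T \<noteq> {} \<longrightarrow> (1 - lam) * pi (card T) \<le> e S T \<and> e S T \<le> (1 + lam) * pi (card T))
      \<and> (\<Sum>T\<in>Pow S. pi (card T)) = 1
      \<and> (\<Sum>T\<in>Pow S. pi (card T) * real (card T)) = real k * p
      \<and> (\<Sum>T\<in>Pow S. pi (card T) * u (card T)) = Q
      \<and> (\<Sum>T\<in>Pow S. pi (card T) * phi (card T)) = Psi"
    if S: "S \<subseteq> {1..m}" "card S = k" for S
  proof -
    have fin: "finite S" using S finite_subset by blast
    have ne: "S \<noteq> {}" using S assms(3) by auto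
    have meas: "\<forall>i\<in>S. E i \<in> sets M" using S assms(2) by blast
    have sp: "\<forall>i\<in>S. E i \<subseteq> space M" using meas sets.sets_into_space by blast
    note ps = per_S[OF assms(1) fin meas S(2)]
    have U: "winU M E S = (\<Sum>T\<in>Pow S. u (card T) * e S T)"
      using ps(2) unfolding u_def e_def by simp
    have V0: "logV M E a b k S = (\<Sum>T\<in>Pow S. F (card T) * e S T)"
      using ps(3) unfolding F_def e_def by simp
    have ck: "card T \<le> k" if "T \<in> Pow S" for T using card_mono[OF fin, of T] that S(2) by simp
    have "(\<Sum>T\<in>Pow S. F (card T) * e S T)
        = (\<Sum>T\<in>Pow S. F 0 * e S T + f1 * (u (card T) * e S T) + phi (card T) * e S T)"
      by (rule sum.cong) (auto simp: phi_def algebra_simps)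
    also have "\<dots> = F 0 * (\<Sum>T\<in>Pow S. e S T) + f1 * (\<Sum>T\<in>Pow S. u (card T) * e S T) + (\<Sum>T\<in>Pow S. phi (card T) * e S T)"
      by (simp add: sum.distrib sum_distrib_left)
    also have "(\<Sum>T\<in>Pow S. e S T) = 1" using ps(1) unfolding e_def by simp
    finally have V: "logV M E a b k S = F 0 + f1 * winU M E S + (\<Sum>T\<in>Pow S. phi (card T) * e S T)"
      using V0 U by simp
    have B: "\<forall>T\<in>Pow S. T \<noteq> {} \<longrightarrow> (1 - lam) * pi (card T) \<le> e S T \<and> e S T \<le> (1 + lam) * pi (card T)"
    proof (intro ballI impI)
      fix T assume T: "T \<in> Pow S" "T \<noteq> {}"
      have "1 \<le> card T" using T fin by (simp add: Suc_le_eq card_gt_0_iff finite_subset)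
      then have h: "(1 - lam) * p ^ card T * (1 - p) ^ (k - card T)
                \<le> measure M ((\<Inter>i\<in>T. E i) \<inter> (\<Inter>j\<in>S - T. space M - E j))
            \<and> measure M ((\<Inter>i\<in>T. E i) \<inter> (\<Inter>j\<in>S - T. space M - E j))
                \<le> (1 + lam) * p ^ card T * (1 - p) ^ (k - card T)"
        using hyp S T by blast
      have "(\<Inter>i\<in>T. E i) \<inter> (\<Inter>j\<in>S - T. space M - E j) = cell M E S T"
        using cell_eq[OF ne sp] T by blast
      then show "(1 - lam) * pi (card T) \<le> e S T \<and> e S T \<le> (1 + lam) * pi (card T)"
        using h unfolding e_def pi_def by (simp add: mult.assoc)
    qed
    have s1: "(\<Sum>T\<in>Pow S. pi (card T)) = 1"
      using sum_pow_card[OF fin, of pi] bin1[of k p] S(2) unfolding pi_def by simp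
    have s2: "(\<Sum>T\<in>Pow S. pi (card T) * real (card T)) = real k * p"
      using sum_pow_card[OF fin, of "\<lambda>l. pi l * real l"] bin2[of k p] S(2) unfolding pi_def by simp
    have "(\<Sum>T\<in>Pow S. pi (card T) * u (card T)) = (\<Sum>T\<in>Pow S. pi (card T) - (if T = {} then pi (card T) else 0))"
      by (rule sum.cong) (auto simp: u_def fin finite_subset)
    also have "\<dots> = 1 - pi 0"
    proof -
      have "(\<Sum>T\<in>Pow S. if T = {} then pi (card T) else 0) = pi 0"
        using sum.delta[OF finite_Pow_iff[THEN iffD2, OF fin], of "{}" "\<lambda>T. pi (card T)"] by simp
      then show ?thesis using s1 by (simp add: sum_subtractf)
    qed
    finally have s3: "(\<Sum>T\<in>Pow S. pi (card T) * u (card T)) = Q" unfolding Q_def pi_def by simp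
    have s4: "(\<Sum>T\<in>Pow S. pi (card T) * phi (card T)) = Psi"
      using sum_pow_card[OF fin, of "\<lambda>l. pi l * phi l"] S(2) unfolding Psi_def by simp
    show ?thesis using U V B s1 s2 s3 s4 by blast
  qed
  have finW: "finite S_W" using assms(10) finite_subset by blast
  have finL: "finite S_L" using assms(7) finite_subset by blast
  note gW = gen[OF assms(10,11)] and gL = gen[OF assms(7,8)]
  note gW1 = gW[THEN conjunct1]
  note gW2 = gW[THEN conjunct2, THEN conjunct1]
  note gW3 = gW[THEN conjunct2, THEN conjunct2, THEN conjunct1]
  note gW4 = gW[THEN conjunct2, THEN conjunct2, THEN conjunct2, THEN conjunct1]
  note gW5 = gW[THEN conjunct2, THEN conjunct2, THEN conjunct2, THEN conjunct2, THEN conjunct1]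
  note gW6 = gW[THEN conjunct2, THEN conjunct2, THEN conjunct2, THEN conjunct2, THEN conjunct2, THEN conjunct1]
  note gW7 = gW[THEN conjunct2, THEN conjunct2, THEN conjunct2, THEN conjunct2, THEN conjunct2, THEN conjunct2]
  note gL1 = gL[THEN conjunct1]
  note gL2 = gL[THEN conjunct2, THEN conjunct1]
  note gL3 = gL[THEN conjunct2, THEN conjunct2, THEN conjunct1]
  note gL4 = gL[THEN conjunct2, THEN conjunct2, THEN conjunct2, THEN conjunct1]
  note gL5 = gL[THEN conjunct2, THEN conjunct2, THEN conjunct2, THEN conjunct2, THEN conjunct1]
  note gL6 = gL[THEN conjunct2, THEN conjunct2, THEN conjunct2, THEN conjunct2, THEN conjunct2, THEN conjunct1]
  note gL7 = gL[THEN conjunct2, THEN conjunct2, THEN conjunct2, THEN conjunct2, THEN conjunct2, THEN conjunct2]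
  have pinn: "pi l \<ge> 0" for l unfolding pi_def using assms(15) p1 by simp
  have ckW: "card T \<le> k" if "T \<in> Pow S_W" for T using card_mono[OF finW, of T] that assms(11) by simp
  have ckL: "card T \<le> k" if "T \<in> Pow S_L" for T using card_mono[OF finL, of T] that assms(8) by simp
  have UW: "winU M E S_W \<ge> (1 - lam) * Q"
  proof -
    have "(1 - lam) * Q = (\<Sum>T\<in>Pow S_W. (1 - lam) * (pi (card T) * u (card T)))"
      by (simp only: sum_distrib_left[symmetric] gW6)
    also have "\<dots> \<le> (\<Sum>T\<in>Pow S_W. u (card T) * e S_W T)"
    proof (rule sum_mono)
      fix T assume T: "T \<in> Pow S_W"
      show "(1 - lam) * (pi (card T) * u (card T)) \<le> u (card T) * e S_W T"
      proof (cases "T = {}")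
        case True then show ?thesis by (simp add: u_def)
      next
        case False
        then have "card T \<noteq> 0" using T finW by (simp add: finite_subset)
        then show ?thesis using gW3 T False by (simp add: u_def)
      qed
    qed
    finally show ?thesis using gW1 by simp
  qed
  have PL: "(\<Sum>T\<in>Pow S_L. phi (card T) * e S_L T) \<le> (1 + lam) * Psi"
  proof -
    have "(\<Sum>T\<in>Pow S_L. phi (card T) * e S_L T) \<le> (\<Sum>T\<in>Pow S_L. (1 + lam) * (pi (card T) * phi (card T)))"
    proof (rule sum_mono)
      fix T assume T: "T \<in> Pow S_L"
      show "phi (card T) * e S_L T \<le> (1 + lam) * (pi (card T) * phi (card T))"
      proof (cases "T = {}")
        case True then show ?thesis by (simp add: phi0)
      next
        case False
        then have "e S_L T \<le> (1 + lam) * pi (card T)" using gL3 T False by blast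
        moreover have "phi (card T) \<ge> 0" using phib ckL[OF T] by blast
        ultimately have "phi (card T) * e S_L T \<le> phi (card T) * ((1 + lam) * pi (card T))"
          by (intro mult_left_mono)
        then show ?thesis by (simp add: mult_ac)
      qed
    qed
    also have "\<dots> = (1 + lam) * Psi" by (simp only: sum_distrib_left[symmetric] gL7)
    finally show ?thesis .
  qed
  have PW: "(\<Sum>T\<in>Pow S_W. phi (card T) * e S_W T) \<ge> (1 - lam) * Psi"
  proof -
    have "(1 - lam) * Psi = (\<Sum>T\<in>Pow S_W. (1 - lam) * (pi (card T) * phi (card T)))"
      by (simp only: sum_distrib_left[symmetric] gW7)
    also have "\<dots> \<le> (\<Sum>T\<in>Pow S_W. phi (card T) * e S_W T)"
    proof (rule sum_mono)
      fix T assume T: "T \<in> Pow S_W"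
      show "(1 - lam) * (pi (card T) * phi (card T)) \<le> phi (card T) * e S_W T"
      proof (cases "T = {}")
        case True then show ?thesis by (simp add: phi0)
      next
        case False
        then have "(1 - lam) * pi (card T) \<le> e S_W T" using gW3 T False by blast
        moreover have "phi (card T) \<ge> 0" using phib ckW[OF T] by blast
        ultimately have "phi (card T) * ((1 - lam) * pi (card T)) \<le> phi (card T) * e S_W T"
          by (intro mult_left_mono)
        then show ?thesis by (simp add: mult_ac)
      qed
    qed
    finally show ?thesis .
  qed
  have PsiB: "Psi \<le> real k * p - Q"
  proof -
    have "Psi = (\<Sum>T\<in>Pow S_W. pi (card T) * phi (card T))" using gW7 by simp
    also have "\<dots> \<le> (\<Sum>T\<in>Pow S_W. pi (card T) * real (card T) - pi (card T) * u (card T))"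
    proof (rule sum_mono)
      fix T assume "T \<in> Pow S_W"
      then have "phi (card T) \<le> real (card T) - u (card T)" using phib ckW by blast
      then show "pi (card T) * phi (card T) \<le> pi (card T) * real (card T) - pi (card T) * u (card T)"
        using pinn[of "card T"] by (simp add: right_diff_distrib[symmetric] mult_left_mono)
    qed
    also have "\<dots> = real k * p - Q" by (simp only: sum_subtractf gW5 gW6)
    finally show ?thesis .
  qed
  have Vle: "logV M E a b k S_W \<le> logV M E a b k S_L" using assms(9,10,11) by blast
  have main: "f1 * (winU M E S_W - winU M E S_L) \<le> 2 * lam * (real k * p - Q)"
  proof -
    have "f1 * (winU M E S_W - winU M E S_L)
        \<le> (\<Sum>T\<in>Pow S_L. phi (card T) * e S_L T) - (\<Sum>T\<in>Pow S_W. phi (card T) * e S_W T)"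
      using Vle gW2 gL2 by (simp add: algebra_simps)
    also have "\<dots> \<le> 2 * lam * Psi" using PL PW by (simp add: algebra_simps)
    also have "\<dots> \<le> 2 * lam * (real k * p - Q)" using PsiB assms(13) by (simp add: mult_left_mono)
    finally show ?thesis .
  qed
  have Qpos: "Q > 0"
  proof -
    have "(1 - p) ^ k \<le> (1 - p) ^ 1" using assms(3,15) p1 by (intro power_decreasing) auto
    then show ?thesis unfolding Q_def using assms(15) by simp
  qed
  have Z: "real k * p - Q \<le> zeta3 * (real k * p * (1 - p))"
  proof -
    have "real k * p - Q \<le> real k * p * (1 - p)"
      using pow_bound[OF assms(3,15,16)] unfolding Q_def by (simp add: algebra_simps power2_eq_square)
    also have "\<dots> \<le> zeta3 * (real k * p * (1 - p))"
    proof -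
      have nn: "0 \<le> real k * p * (1 - p)" using assms(15) p1 by simp
      show ?thesis using mult_right_mono[OF zeta3_ge1 nn] by simp
    qed
    finally show ?thesis .
  qed
  define D where "D = winU M E S_W - winU M E S_L"
  define R where "R = 2 * zeta3 * lam * real k * p * (1 - p) / (f1 * (1 - lam) * Q)"
  have den: "(1 - lam) * Q > 0" using lam1 Qpos by simp
  have Rnn: "R \<ge> 0" unfolding R_def using zeta3_ge1 assms(13,15) p1 lam1 Qpos f1pos kpos by simp
  have UWp: "winU M E S_W > 0" using UW den by linarith
  have "D / winU M E S_W \<le> R"
  proof (cases "D \<le> 0")
    case True
    then have "D / winU M E S_W \<le> 0" using UWp by (simp add: divide_nonpos_pos)
    then show ?thesis using Rnn by linarith
  next
    case False
    then have "D / winU M E S_W \<le> D / ((1 - lam) * Q)" using UW den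
      by (intro divide_left_mono) auto
    also have "\<dots> \<le> (2 * lam * zeta3 * (real k * p * (1 - p)) / f1) / ((1 - lam) * Q)"
    proof (rule divide_right_mono)
      have "f1 * D \<le> 2 * lam * (zeta3 * (real k * p * (1 - p)))"
      proof -
        have "2 * lam * (real k * p - Q) \<le> 2 * lam * (zeta3 * (real k * p * (1 - p)))"
          using Z assms(13) by (intro mult_left_mono) auto
        then show ?thesis using main unfolding D_def by linarith
      qed
      then show "D \<le> 2 * lam * zeta3 * (real k * p * (1 - p)) / f1"
        using f1pos by (simp add: field_simps)
    qed (use den in simp)
    also have "\<dots> = R" unfolding R_def by (simp add: field_simps)
    finally show ?thesis .
  qed
  then show "(winU M E S_W - winU M E S_L) / winU M E S_W
      \<le> 2 * zeta3 * lam * real k * p * (1 - p)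
         / (ln (1 + (b - a) / (real k * a)) * (1 - lam) * (1 - (1 - p) ^ k))"
    unfolding D_def R_def f1_def Q_def by (simp add: mult.assoc)
qed

end
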